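(* Let $d\ge2$, $\varepsilon\in(0,1)$, $c\in\{1,2,\dots\}\cup\{\infty\}$. With the boundary cells $p_1,\dots,p_k$, the vectors $R_j$ and the map $f$ defined below, the $(d-1)\times k$ matrix $R=[R_1,\dots,R_k]$ is weakly completely-$\mathcal S$ with respect to $f$.
   Context: SBBS: fix $\varepsilon\in[0,1]$, capacity $c\in\{1,2,\dots\}\cup\{\infty\}$. A configuration is $\zeta\in\{0,1\}^{\mathbb N}$ with finitely many $1$'s (balls). Given $\zeta$, the carrier $\Gamma$ has $\Gamma(0)=0$ and recursively (fresh independent randomness at each $k$): $\Gamma(k)=\Gamma(k-1)+1$ with probability $1-\varepsilon$ (else unchanged) if $\zeta(k)=1$ and $\Gamma(k-1)<c$; $\Gamma(k)=\Gamma(k-1)-1$ if $\zeta(k)=0$ and $\Gamma(k-1)\ge1$; $\Gamma(k)=\Gamma(k-1)$ otherwise. The new configuration is $\zeta'(k)=\mathbf 1(\Gamma(k)-\Gamma(k-1)=-1)+\mathbf 1(\Gamma(k)=\Gamma(k-1),\zeta(k)=1)$; iterating independently gives the SBBS. With $d$ balls at positions $\zeta^{(1)}_t<\dots<\zeta^{(d)}_t$, the gap process is $W_t\in\mathbb Z^{d-1}_{\ge0}$, $W^i_t=\zeta^{(i+1)}_t-\zeta^{(i)}_t-1$, a time-homogeneous Markov chain. Boundary cells: $\partial\mathbb Z^{d-1}_{\ge1}=\mathbb Z^{d-1}_{\ge0}\setminus\mathbb Z^{d-1}_{\ge1}$. $\{p_1,\dots,p_k\}$ is the (finite) partition of $\partial\mathbb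 Z^{d-1}_{\ge1}$ into equivalence classes of the relation "the conditional laws of $W_1-W_0$ given $W_0=x$ and given $W_0=y$ coincide" for the SBBS with capacity $\infty$ and some fixed error probability in $(0,1)$. For every $\varepsilon\in(0,1)$ and every $c$ the transition kernel of $W$ is constant on each cell, and each cell has the form $p_j=\{y\in\partial\mathbb Z^{d-1}_{\ge1}: y_i=x^j_i\ (i\in I^j),\ y_i\ge x^j_i\ (i\notin I^j)\}$ for some $x^j\in\partial\mathbb Z^{d-1}_{\ge1}$ and nonempty $I^j\subseteq\{1,\dots,d-1\}$ with $x^j_i=1$ for $i<\min I^j$ and $x^j_{\min I^j}=0$. The cells are indexed so that for $j\le d-1$, $p_j=\{y: y_j=0,\ y_{j+1}\ge2,\ y_i\ge1\ (i\notin\{j,j+1\})\}$. Define $R_j=\mathbb E[W_1-W_0\mid W_0=x]$ for any $x\in p_j$ (for the SBBS with the given $\varepsilon,c$), and $f(j)=I^j=\{i:\sup_{y\in p_j}y_i<\infty\}$. Weakly completely-$\mathcal S$: for an $m\times k$ matrix $R$ and $f:\{1,\dots,k\}\to\mathcal P(\{1,\dots,m\})$, for nonempty $I\subseteq\{1,\dots,m\}$ set $J_I=\{j: f(j)\subseteq I\}$ and $R_I=R_{I,J_I}$; $R$ is weakly completely-$\mathcal S$ w.r.t. $f$ if for every nonempty $I$ there is $\lambda_I\in\mathbb R^I_{>0}$ with $(\lambda_I^\top R_I)_j\ge1$ for all $j\in J_I$. *)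

theory Defs
  imports "HOL-Probability.Probability"
begin

text \<open>Sites are 1,2,3,...; a configuration is a predicate zeta on nat (site 0 unused).
  The coin u k = True means "the carrier picks up the ball at site k" (probability 1 - eps);
  the coin is only used when zeta k holds and the carrier load is below the capacity c.\<close>

fun carrier :: "enat \<Rightarrow> (nat \<Rightarrow> bool) \<Rightarrow> (nat \<Rightarrow> bool) \<Rightarrow> nat \<Rightarrow> nat" where
  "carrier c zeta u 0 = 0"
| "carrier c zeta u (Suc k) =
     (let g = carrier c zeta u k in
      if zeta (Suc k) \<and> enat g < c then (if u (Suc k) then g + 1 else g)
      else if \<not> zeta (Suc k) \<and> g \<ge> 1 then g - 1
      else g)"

definition sbbs_step :: "enat \<Rightarrow> (nat \<Rightarrow> bool) \<Rightarrow> (nat \<Rightarrow> bool) \<Rightarrow> nat \<Rightarrow> bool" where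
  "sbbs_step c zeta u k =
     (k \<noteq> 0 \<and>
      (carrier c zeta u k + 1 = carrier c zeta u (k - 1) \<or>
       (carrier c zeta u k = carrier c zeta u (k - 1) \<and> zeta k)))"

text \<open>Gap vectors in Z^{d-1}_{>=0} are functions nat => nat supported on {1..d-1}.\<close>
definition gap_space :: "nat \<Rightarrow> (nat \<Rightarrow> nat) set" where
  "gap_space d = {x. \<forall>i. i \<notin> {1..d-1} \<longrightarrow> x i = 0}"

definition boundary :: "nat \<Rightarrow> (nat \<Rightarrow> nat) set" where
  "boundary d = {x \<in> gap_space d. \<exists>i\<in>{1..d-1}. x i = 0}"

fun ball_pos :: "(nat \<Rightarrow> nat) \<Rightarrow> nat \<Rightarrow> nat" where
  "ball_pos x 0 = 0"
| "ball_pos x (Suc i) = (if i = 0 then 1 else ball_pos x i + x i + 1)"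

definition config_of_gaps :: "nat \<Rightarrow> (nat \<Rightarrow> nat) \<Rightarrow> nat \<Rightarrow> bool" where
  "config_of_gaps d x k = (\<exists>i\<in>{1..d}. k = ball_pos x i)"

definition gaps_of_config :: "nat \<Rightarrow> (nat \<Rightarrow> bool) \<Rightarrow> nat \<Rightarrow> nat" where
  "gaps_of_config d zeta i =
     (let s = sorted_list_of_set {k. zeta k} in
      if i \<in> {1..d-1} then s ! i - s ! (i - 1) - 1 else 0)"

text \<open>Independent coins at all sites 1..(position of last ball); sites further right carry no
  ball and their coins are irrelevant.\<close>
definition coins :: "real \<Rightarrow> nat \<Rightarrow> (nat \<Rightarrow> nat) \<Rightarrow> (nat \<Rightarrow> bool) pmf" where
  "coins eps d x = Pi_pmf {1..ball_pos x d} False (\<lambda>_. bernoulli_pmf (1 - eps))"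

definition increment_law :: "real \<Rightarrow> enat \<Rightarrow> nat \<Rightarrow> (nat \<Rightarrow> nat) \<Rightarrow> (nat \<Rightarrow> int) pmf" where
  "increment_law eps c d x =
     map_pmf (\<lambda>u i. int (gaps_of_config d (sbbs_step c (config_of_gaps d x) u) i) - int (x i))
             (coins eps d x)"

definition drift :: "real \<Rightarrow> enat \<Rightarrow> nat \<Rightarrow> (nat \<Rightarrow> nat) \<Rightarrow> nat \<Rightarrow> real" where
  "drift eps c d x i = measure_pmf.expectation (increment_law eps c d x) (\<lambda>v. real_of_int (v i))"

definition cells :: "real \<Rightarrow> nat \<Rightarrow> (nat \<Rightarrow> nat) set set" where
  "cells eps0 d = boundary d //
     {(x, y). x \<in> boundary d \<and> y \<in> boundary d \<and>
              increment_law eps0 \<infinity> d x = increment_law eps0 \<infinity> d y}"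

text \<open>R_j: drift at (any, here a chosen) point of the cell p.\<close>
definition cell_drift :: "real \<Rightarrow> enat \<Rightarrow> nat \<Rightarrow> (nat \<Rightarrow> nat) set \<Rightarrow> nat \<Rightarrow> real" where
  "cell_drift eps c d p = drift eps c d (SOME x. x \<in> p)"

definition cell_f :: "nat \<Rightarrow> (nat \<Rightarrow> nat) set \<Rightarrow> nat set" where
  "cell_f d p = {i \<in> {1..d-1}. bdd_above ((\<lambda>y. y i) ` p)}"

text \<open>Matrix R with rows 1..m and columns indexed by the set J (the paper uses J = {1..k});
  R i j is the (i,j) entry. R_I = R_{I,J_I} with J_I = {j. f j \<subseteq> I}.\<close>
definition weakly_completely_S ::
    "nat \<Rightarrow> 'j set \<Rightarrow> (nat \<Rightarrow> 'j \<Rightarrow> real) \<Rightarrow> ('j \<Rightarrow> nat set) \<Rightarrow> bool" where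
  "weakly_completely_S m J R f \<longleftrightarrow>
     (\<forall>I. I \<subseteq> {1..m} \<and> I \<noteq> {} \<longrightarrow>
        (\<exists>lam :: nat \<Rightarrow> real. (\<forall>i\<in>I. lam i > 0) \<and>
           (\<forall>j\<in>J. f j \<subseteq> I \<longrightarrow> (\<Sum>i\<in>I. lam i * R i j) \<ge> 1)))"

end

theory Submission
  imports Defs
begin


lemma car_ball_le: "zeta (Suc s) \<Longrightarrow> carrier c zeta u (Suc s) \<le> carrier c zeta u s + 1"
  by (auto simp: Let_def)

lemma car_ball_nopick: "zeta (Suc s) \<Longrightarrow> \<not> u (Suc s) \<Longrightarrow> carrier c zeta u (Suc s) = carrier c zeta u s"
  by (auto simp: Let_def)

lemma car_ball_pick0: "zeta (Suc s) \<Longrightarrow> u (Suc s) \<Longrightarrow> carrier c zeta u s = 0 \<Longrightarrow> c \<noteq> 0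
   \<Longrightarrow> carrier c zeta u (Suc s) = 1"
  by (auto simp: Let_def zero_enat_def[symmetric] gr_zeroI)

lemma car_empty: "\<not> zeta (Suc s) \<Longrightarrow> carrier c zeta u (Suc s) = carrier c zeta u s - 1"
  by (auto simp: Let_def)

definition cnt :: "(nat \<Rightarrow> bool) \<Rightarrow> nat \<Rightarrow> nat" where
  "cnt P s = card {t. t \<le> s \<and> P t}"

lemma cnt_Suc: "cnt P (Suc s) = cnt P s + (if P (Suc s) then 1 else 0)"
proof -
  have "{t. t \<le> Suc s \<and> P t} = {t. t \<le> s \<and> P t} \<union> (if P (Suc s) then {Suc s} else {})"
    by (auto simp: le_Suc_eq)
  moreover have "finite {t. t \<le> s \<and> P t}" by simp
  ultimately show ?thesis unfolding cnt_def by (auto simp: card_insert_if)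
qed

lemma cnt_0: "\<not> P 0 \<Longrightarrow> cnt P 0 = 0"
  by (auto simp: cnt_def)

lemma cnt_mono: "s \<le> s' \<Longrightarrow> cnt P s \<le> cnt P s'"
  unfolding cnt_def by (rule card_mono) auto

lemma step_identity:
  assumes "\<not> zeta 0"
  shows "cnt (sbbs_step c zeta u) s + carrier c zeta u s = cnt zeta s"
proof (induction s)
  case 0
  then show ?case using assms by (simp add: cnt_0 sbbs_step_def)
next
  case (Suc s)
  have "carrier c zeta u (Suc s) + (if sbbs_step c zeta u (Suc s) then 1 else 0)
        = carrier c zeta u s + (if zeta (Suc s) then 1 else 0)"
    by (auto simp: Let_def sbbs_step_def)
  then show ?case using Suc by (simp add: cnt_Suc)
qed



lemma bp_1[simp]: "ball_pos x (Suc 0) = 1" by simp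

lemma bp_Suc: "i \<ge> 1 \<Longrightarrow> ball_pos x (Suc i) = ball_pos x i + x i + 1" by simp

lemma bp_ge: "1 \<le> i \<Longrightarrow> i \<le> ball_pos x i"
proof (induction i)
  case 0 then show ?case by simp
next
  case (Suc i) then show ?case by (cases "i = 0") auto
qed

lemma bp_strict: "1 \<le> i \<Longrightarrow> i < j \<Longrightarrow> ball_pos x i < ball_pos x j"
proof (induction j)
  case 0 then show ?case by simp
next
  case (Suc j)
  then show ?case by (cases "i = j") (auto simp: less_Suc_eq)
qed

lemma bp_less_iff: "1 \<le> i \<Longrightarrow> 1 \<le> j \<Longrightarrow> ball_pos x i < ball_pos x j \<longleftrightarrow> i < j"
  by (metis bp_strict linorder_neqE_nat order_less_asym)

lemma bp_le_iff: "1 \<le> i \<Longrightarrow> 1 \<le> j \<Longrightarrow> ball_pos x i \<le> ball_pos x j \<longleftrightarrow> i \<le> j"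
  by (meson bp_less_iff not_le)

lemma bp_eq_iff: "1 \<le> i \<Longrightarrow> 1 \<le> j \<Longrightarrow> ball_pos x i = ball_pos x j \<longleftrightarrow> i = j"
  by (metis bp_less_iff nat_neq_iff)

lemma cfg_iff: "config_of_gaps d x t \<longleftrightarrow> (\<exists>i\<in>{1..d}. t = ball_pos x i)"
  by (simp add: config_of_gaps_def)

lemma cfg_0: "\<not> config_of_gaps d x 0"
  unfolding config_of_gaps_def using bp_ge by (metis atLeastAtMost_iff not_one_le_zero order_trans)

lemma cfg_pos: "k \<in> {1..d} \<Longrightarrow> config_of_gaps d x (ball_pos x k)"
  unfolding config_of_gaps_def by auto

lemma cfg_between: "1 \<le> i \<Longrightarrow> ball_pos x i < t \<Longrightarrow> t < ball_pos x (Suc i) \<Longrightarrow> \<not> config_of_gaps d x t"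
proof
  assume a: "1 \<le> i" "ball_pos x i < t" "t < ball_pos x (Suc i)" "config_of_gaps d x t"
  then obtain j where j: "j \<in> {1..d}" "t = ball_pos x j" by (auto simp: cfg_iff)
  then have "i < j" "j < Suc i" using a bp_less_iff[of i j x] bp_less_iff[of j "Suc i" x] by auto
  then show False by simp
qed

lemma N_idx: "cnt (config_of_gaps d x) b = card {i\<in>{1..d}. ball_pos x i \<le> b}"
proof -
  have "{t. t \<le> b \<and> config_of_gaps d x t} = ball_pos x ` {i\<in>{1..d}. ball_pos x i \<le> b}"
    by (auto simp: cfg_iff)
  moreover have "inj_on (ball_pos x) {i\<in>{1..d}. ball_pos x i \<le> b}"
    by (auto simp: inj_on_def bp_eq_iff)
  ultimately show ?thesis unfolding cnt_def by (simp add: card_image)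
qed

lemma N_val: assumes "k \<le> d" "\<And>i. 1 \<le> i \<Longrightarrow> i \<le> d \<Longrightarrow> ball_pos x i \<le> b \<longleftrightarrow> i \<le> k"
  shows "cnt (config_of_gaps d x) b = k"
proof -
  have "{i\<in>{1..d}. ball_pos x i \<le> b} = {1..k}" using assms by auto
  then show ?thesis by (simp add: N_idx)
qed

lemma N_le_d: "cnt (config_of_gaps d x) b \<le> d"
proof -
  have "card {i\<in>{1..d}. ball_pos x i \<le> b} \<le> card {1..d}" by (intro card_mono) auto
  then show ?thesis unfolding N_idx by simp
qed

lemma N_pos: "k \<in> {1..d} \<Longrightarrow> cnt (config_of_gaps d x) (ball_pos x k) = k"
  by (rule N_val) (auto simp: bp_le_iff)

lemma N_pos_minus: "k \<in> {1..d} \<Longrightarrow> cnt (config_of_gaps d x) (ball_pos x k - 1) = k - 1"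
proof (rule N_val)
  fix i assume "k \<in> {1..d}" "1 \<le> i" "i \<le> d"
  then show "ball_pos x i \<le> ball_pos x k - 1 \<longleftrightarrow> i \<le> k - 1"
    using bp_less_iff[of i k x] bp_ge[of k x] by auto
qed auto

lemma N_pos_plus: assumes "i \<in> {1..<d}" "x i \<ge> 1"
  shows "cnt (config_of_gaps d x) (ball_pos x i + 1) = i"
proof (rule N_val)
  fix j assume "1 \<le> j" "j \<le> d"
  have s: "ball_pos x (Suc i) = ball_pos x i + x i + 1" using assms by simp
  show "ball_pos x j \<le> ball_pos x i + 1 \<longleftrightarrow> j \<le> i"
  proof
    assume "ball_pos x j \<le> ball_pos x i + 1"
    then have "ball_pos x j < ball_pos x (Suc i)" using s assms by simp
    then show "j \<le> i" using bp_less_iff[of j "Suc i" x] \<open>1 \<le> j\<close> by simp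
  next
    assume "j \<le> i" then show "ball_pos x j \<le> ball_pos x i + 1"
      using bp_le_iff[of j i x] \<open>1 \<le> j\<close> by simp
  qed
qed (use assms in auto)

lemma sl_card_less:
  fixes S :: "nat set"
  assumes "finite S" "j < card S"
  shows "sorted_list_of_set S ! j \<in> S" "card {y\<in>S. y < sorted_list_of_set S ! j} = j"
proof -
  let ?s = "sorted_list_of_set S"
  have len: "length ?s = card S" by simp
  have st: "sorted_wrt (<) ?s" using assms by simp
  have set: "set ?s = S" using assms by simp
  have di: "distinct ?s" using assms by simp
  show "?s ! j \<in> S" using assms len set nth_mem by metis
  have "{y\<in>S. y < ?s ! j} = (\<lambda>i. ?s ! i) ` {..<j}"
  proof safe
    fix y assume "y \<in> S" "y < ?s ! j"
    then obtain i where i: "i < length ?s" "y = ?s ! i" using set by (metis in_set_conv_nth)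
    have "i < j"
    proof (rule ccontr)
      assume "\<not> i < j"
      then have "j \<le> i" by simp
      then have "?s ! j \<le> ?s ! i" using st i(1) 
        by (metis le_eq_less_or_eq order.strict_implies_order sorted_wrt_nth_less)
      then show False using i \<open>y < ?s ! j\<close> by simp
    qed
    then show "y \<in> (\<lambda>i. ?s ! i) ` {..<j}" using i by auto
  next
    fix i assume "i < j"
    then show "?s ! i \<in> S" using assms len set nth_mem by (metis order.strict_trans)
    show "?s ! i < ?s ! j" using st \<open>i < j\<close> assms len sorted_wrt_nth_less by metis
  qed
  moreover have "inj_on (\<lambda>i. ?s ! i) {..<j}"
    using di assms len by (auto simp: inj_on_def nth_eq_iff_index_eq)
  ultimately show "card {y\<in>S. y < ?s ! j} = j" by (simp add: card_image)
qed

lemma sl_lower: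
  fixes S :: "nat set"
  assumes "finite S" "1 \<le> k" "k \<le> card S" "card {y\<in>S. y \<le> b} < k"
  shows "b < sorted_list_of_set S ! (k - 1)"
proof (rule ccontr)
  let ?a = "sorted_list_of_set S ! (k - 1)"
  assume "\<not> b < ?a"
  have m: "?a \<in> S" "card {y\<in>S. y < ?a} = k - 1" using sl_card_less[of S "k-1"] assms by auto
  have "{y\<in>S. y \<le> ?a} = insert ?a {y\<in>S. y < ?a}" using m by auto
  then have "card {y\<in>S. y \<le> ?a} = k" using m assms by simp
  moreover have "card {y\<in>S. y \<le> ?a} \<le> card {y\<in>S. y \<le> b}"
    using \<open>\<not> b < ?a\<close> assms by (intro card_mono) auto
  ultimately show False using assms by simp
qed

lemma sl_upper:
  fixes S :: "nat set"
  assumes "finite S" "1 \<le> k" "k \<le> card S" "card {y\<in>S. y \<le> b} \<ge> k"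
  shows "sorted_list_of_set S ! (k - 1) \<le> b"
proof (rule ccontr)
  let ?a = "sorted_list_of_set S ! (k - 1)"
  assume "\<not> ?a \<le> b"
  have m: "card {y\<in>S. y < ?a} = k - 1" using sl_card_less[of S "k-1"] assms by auto
  have "card {y\<in>S. y \<le> b} \<le> card {y\<in>S. y < ?a}"
    using \<open>\<not> ?a \<le> b\<close> assms by (intro card_mono) auto
  then show False using m assms by simp
qed

lemma sl_strict:
  fixes S :: "nat set"
  assumes "finite S" "j < card S" "i < j"
  shows "sorted_list_of_set S ! i < sorted_list_of_set S ! j"
  using assms sorted_wrt_nth_less[of "(<)" "sorted_list_of_set S" i j] by simp



definition newc :: "enat \<Rightarrow> nat \<Rightarrow> (nat \<Rightarrow> nat) \<Rightarrow> (nat \<Rightarrow> bool) \<Rightarrow> nat \<Rightarrow> bool" where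
  "newc c d x u = sbbs_step c (config_of_gaps d x) u"

definition posn :: "enat \<Rightarrow> nat \<Rightarrow> (nat \<Rightarrow> nat) \<Rightarrow> (nat \<Rightarrow> bool) \<Rightarrow> nat \<Rightarrow> nat" where
  "posn c d x u k = sorted_list_of_set {t. newc c d x u t} ! (k - 1)"

lemma Nnew_eq: "cnt (newc c d x u) s + carrier c (config_of_gaps d x) u s = cnt (config_of_gaps d x) s"
  unfolding newc_def by (rule step_identity) (rule cfg_0)

lemma G3_inv:
  fixes x :: "nat \<Rightarrow> nat" and c u
  assumes k: "k \<in> {1..d}"
  defines "a \<equiv> ball_pos x k"
  shows "cnt (newc c d x u) (a + j) \<ge> k \<or>
         carrier c (config_of_gaps d x) u (a + j) + j + 2 * k
           \<le> carrier c (config_of_gaps d x) u a + 2 * cnt (config_of_gaps d x) (a + j)"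
proof (induction j)
  case 0
  then show ?case using N_pos[OF k, of x] a_def by simp
next
  case (Suc j)
  let ?G = "carrier c (config_of_gaps d x) u"
  let ?N = "cnt (config_of_gaps d x)"
  let ?N' = "cnt (newc c d x u)"
  show ?case
  proof (cases "?N' (a + j) \<ge> k")
    case True
    have "?N' (a + j) \<le> ?N' (a + Suc j)" by (rule cnt_mono) simp
    then show ?thesis using True by (intro disjI1) linarith
  next
    case False
    have e: "?N' (a + j) + ?G (a + j) = ?N (a + j)" by (rule Nnew_eq)
    have "?N a \<le> ?N (a + j)" by (rule cnt_mono) simp
    then have Nk: "k \<le> ?N (a + j)" using N_pos[OF k, of x] a_def by simp
    have ih: "?G (a + j) + j + 2 * k \<le> ?G a + 2 * ?N (a + j)" using Suc False by simp
    have sa: "a + Suc j = Suc (a + j)" by simp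
    show ?thesis
    proof (cases "config_of_gaps d x (Suc (a + j))")
      case True
      have "?G (Suc (a + j)) \<le> ?G (a + j) + 1" by (rule car_ball_le[where zeta="config_of_gaps d x", OF True])
      moreover have "?N (Suc (a + j)) = ?N (a + j) + 1" using True by (simp add: cnt_Suc)
      ultimately show ?thesis using ih sa by simp
    next
      case F: False
      have "?G (Suc (a + j)) = ?G (a + j) - 1" by (rule car_empty[where zeta="config_of_gaps d x", OF F])
      moreover have "?N (Suc (a + j)) = ?N (a + j)" using F by (simp add: cnt_Suc)
      moreover have "?G (a + j) \<ge> 1" using e Nk False by linarith
      ultimately show ?thesis using ih sa by simp
    qed
  qed
qed

lemma G3:
  assumes k: "k \<in> {1..d}"
  shows "cnt (newc c d x u) (ball_pos x k + 2 * d) \<ge> k"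
proof (rule ccontr)
  let ?a = "ball_pos x k"
  let ?G = "carrier c (config_of_gaps d x) u"
  let ?N = "cnt (config_of_gaps d x)"
  let ?N' = "cnt (newc c d x u)"
  assume nk: "\<not> ?N' (?a + 2 * d) \<ge> k"
  then have i: "?G (?a + 2 * d) + 2 * d + 2 * k \<le> ?G ?a + 2 * ?N (?a + 2 * d)"
    using G3_inv[OF k, where j="2 * d" and x=x and c=c and u=u] by simp
  have e: "?N' (?a + 2 * d) + ?G (?a + 2 * d) = ?N (?a + 2 * d)" by (rule Nnew_eq)
  have e0: "?N' ?a + ?G ?a = ?N ?a" by (rule Nnew_eq)
  have "?N ?a = k" using N_pos[OF k] .
  moreover have "?N (?a + 2 * d) \<le> d" by (rule N_le_d)
  ultimately show False using i e e0 nk by linarith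
qed

lemma Nnew_le_d: "cnt (newc c d x u) s \<le> d"
  using Nnew_eq[of c d x u s] N_le_d[of d x s] by linarith

lemma new_fin_card:
  assumes "d \<ge> 1"
  shows "finite {t. newc c d x u t}" "card {t. newc c d x u t} = d"
proof -
  let ?T = "ball_pos x d + 2 * d"
  let ?N' = "cnt (newc c d x u)"
  have T: "?N' ?T \<ge> d" using G3[where k=d and d=d and x=x and c=c and u=u] assms by simp
  have sub: "{t. newc c d x u t} = {t. t \<le> ?T \<and> newc c d x u t}"
  proof safe
    fix t assume t: "newc c d x u t"
    show "t \<le> ?T"
    proof (rule ccontr)
      assume "\<not> t \<le> ?T"
      then have "insert t {s. s \<le> ?T \<and> newc c d x u s} \<subseteq> {s. s \<le> t \<and> newc c d x u s}"
        using t by auto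
      then have "card (insert t {s. s \<le> ?T \<and> newc c d x u s}) \<le> ?N' t"
        unfolding cnt_def by (intro card_mono) auto
      moreover have "card (insert t {s. s \<le> ?T \<and> newc c d x u s}) = ?N' ?T + 1"
        using \<open>\<not> t \<le> ?T\<close> unfolding cnt_def by simp
      ultimately show False using T Nnew_le_d[of c d x u t] by simp
    qed
  qed
  show "finite {t. newc c d x u t}" by (subst sub) simp
  show "card {t. newc c d x u t} = d"
    using sub T Nnew_le_d[of c d x u ?T] unfolding cnt_def by simp
qed

lemma cnt_as: "cnt P b = card {y\<in>{t. P t}. y \<le> b}"
  unfolding cnt_def by (simp add: conj_commute)

lemma posn_lower:
  assumes "d \<ge> 1" "k \<in> {1..d}" "cnt (newc c d x u) b < k"
  shows "b < posn c d x u k"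
  unfolding posn_def
  using sl_lower[of "{t. newc c d x u t}" k b] new_fin_card[OF assms(1), of c x u] assms
  by (simp add: cnt_as)

lemma posn_upper:
  assumes "d \<ge> 1" "k \<in> {1..d}" "cnt (newc c d x u) b \<ge> k"
  shows "posn c d x u k \<le> b"
  unfolding posn_def
  using sl_upper[of "{t. newc c d x u t}" k b] new_fin_card[OF assms(1), of c x u] assms
  by (simp add: cnt_as)

lemma posn_ge:
  assumes "d \<ge> 1" "k \<in> {1..d}"
  shows "ball_pos x k \<le> posn c d x u k"
proof -
  have "cnt (newc c d x u) (ball_pos x k - 1) \<le> cnt (config_of_gaps d x) (ball_pos x k - 1)"
    using Nnew_eq[of c d x u] by (metis le_add1)
  then have "cnt (newc c d x u) (ball_pos x k - 1) < k" using N_pos_minus[OF assms(2), of x] assms by simp linarith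
  from posn_lower[OF assms this] show ?thesis by simp
qed

lemma posn_le:
  assumes "d \<ge> 1" "k \<in> {1..d}"
  shows "posn c d x u k \<le> ball_pos x k + 2 * d"
  using posn_upper[OF assms G3[OF assms(2)]] .

lemma gaps_new:
  assumes "d \<ge> 1" "i \<in> {1..<d}"
  shows "gaps_of_config d (newc c d x u) i = posn c d x u (Suc i) - posn c d x u i - 1"
        "posn c d x u i < posn c d x u (Suc i)"
proof -
  show "gaps_of_config d (newc c d x u) i = posn c d x u (Suc i) - posn c d x u i - 1"
    using assms unfolding gaps_of_config_def posn_def by (auto simp: Let_def)
  show "posn c d x u i < posn c d x u (Suc i)"
    using assms new_fin_card[OF assms(1), of c x u] unfolding posn_def
    by (intro sl_strict) auto
qed

lemma x_gap:
  assumes "i \<in> {1..<d}"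
  shows "x i = ball_pos x (Suc i) - ball_pos x i - 1"
  using assms by simp

lemma inc_eq:
  assumes "d \<ge> 1" "i \<in> {1..<d}"
  shows "int (gaps_of_config d (newc c d x u) i) - int (x i)
       = (int (posn c d x u (Suc i)) - int (ball_pos x (Suc i)))
         - (int (posn c d x u i) - int (ball_pos x i))"
  using gaps_new[OF assms, of c x u] assms by simp

lemma inc_lower:
  assumes "d \<ge> 1" "i \<in> {1..<d}"
  shows "int (gaps_of_config d (newc c d x u) i) - int (x i) \<ge> - 2 * int d"
proof -
  have "ball_pos x (Suc i) \<le> posn c d x u (Suc i)" using posn_ge[OF assms(1), of "Suc i" x c u] assms by (simp del: ball_pos.simps)
  moreover have "posn c d x u i \<le> ball_pos x i + 2 * d" using posn_le[OF assms(1), of i c x u] assms by simp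
  ultimately show ?thesis unfolding inc_eq[OF assms] by linarith
qed



lemma D2:
  assumes d: "d \<ge> 1" and m: "m \<in> {1..<d}" and xm: "x m = 0" and c: "c \<noteq> 0"
    and u0: "\<And>j. j \<in> {1..m} \<Longrightarrow> \<not> u (ball_pos x j)"
    and u1: "u (ball_pos x (Suc m))"
  shows "gaps_of_config d (newc c d x u) m \<ge> 1"
proof -
  let ?z = "config_of_gaps d x"
  let ?G = "carrier c ?z u"
  have G0: "t \<le> ball_pos x m \<longrightarrow> ?G t = 0" for t
  proof (induction t)
    case 0 then show ?case by simp
  next
    case (Suc t)
    show ?case
    proof
      assume st: "Suc t \<le> ball_pos x m"
      then have g: "?G t = 0" using Suc by simp
      show "?G (Suc t) = 0"
      proof (cases "?z (Suc t)")
        case True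
        then obtain j where j: "j \<in> {1..d}" "Suc t = ball_pos x j" by (auto simp: cfg_iff)
        then have "j \<le> m" using st bp_le_iff[of j m x] m by auto
        then have "\<not> u (Suc t)" using u0 j by auto
        then show ?thesis using car_ball_nopick[where zeta="?z", OF True] g by simp
      next
        case False
        then show ?thesis using car_empty[where zeta="?z", OF False] g by simp
      qed
    qed
  qed
  have sm: "ball_pos x (Suc m) = Suc (ball_pos x m)" using m xm by simp
  have G1: "?G (ball_pos x (Suc m)) = 1"
    unfolding sm
    by (rule car_ball_pick0[OF _ _ _ c]) (use cfg_pos[of "Suc m" d x] m sm u1 G0 in auto)
  have k1: "m \<in> {1..d}" "Suc m \<in> {1..d}" using m by auto
  have "cnt (newc c d x u) (ball_pos x m) = m"
    using Nnew_eq[of c d x u "ball_pos x m"] G0 N_pos[OF k1(1)] by simp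
  then have p1: "posn c d x u m \<le> ball_pos x m" using posn_upper[OF d k1(1)] by simp
  have "cnt (newc c d x u) (ball_pos x (Suc m)) = m"
    using Nnew_eq[of c d x u "ball_pos x (Suc m)"] G1 N_pos[OF k1(2), of x] by simp
  then have p2: "ball_pos x (Suc m) < posn c d x u (Suc m)" using posn_lower[OF d k1(2)] by simp
  show ?thesis using gaps_new[OF d m, of c x u] p1 p2 sm by simp
qed

lemma D3:
  assumes d: "d \<ge> 1" and m: "m \<in> {1..<d}" and xj: "\<And>j. j \<in> {1..<m} \<Longrightarrow> x j \<ge> 1"
    and c: "c \<noteq> 0" and i: "i \<in> {1..<m}"
  shows "int (gaps_of_config d (newc c d x u) i) - int (x i)
     \<ge> (if u (ball_pos x (Suc i)) then 1 else 0) - (if u (ball_pos x i) then 1 else 0)"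
proof -
  let ?z = "config_of_gaps d x"
  let ?G = "carrier c ?z u"
  have G0: "t \<le> ball_pos x m \<longrightarrow> ?G t = (if ?z t \<and> u t then 1 else 0)" for t
  proof (induction t)
    case 0 then show ?case by (simp add: cfg_0)
  next
    case (Suc t)
    show ?case
    proof
      assume st: "Suc t \<le> ball_pos x m"
      then have g: "?G t = (if ?z t \<and> u t then 1 else 0)" using Suc by simp
      show "?G (Suc t) = (if ?z (Suc t) \<and> u (Suc t) then 1 else 0)"
      proof (cases "?z (Suc t)")
        case True
        then obtain j where j: "j \<in> {1..d}" "Suc t = ball_pos x j" by (auto simp: cfg_iff)
        then have jm: "j \<le> m" using st bp_le_iff[of j m x] m by auto
        have nz: "\<not> ?z t"
        proof (cases "j = 1")
          case True
          then show ?thesis using j cfg_0[of d x] by simp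
        next
          case False
          then obtain j' where j': "j = Suc j'" "j' \<ge> 1" using j by (cases j) auto
          then have "x j' \<ge> 1" using xj jm by auto
          then have "ball_pos x j' < t" "t < ball_pos x (Suc j')" using j j' by auto
          then show ?thesis using cfg_between j' by blast
        qed
        then have g0: "?G t = 0" using g by simp
        show ?thesis
        proof (cases "u (Suc t)")
          case True
          then show ?thesis using car_ball_pick0[where zeta="?z" and s=t and u=u, OF \<open>?z (Suc t)\<close> True g0 c] \<open>?z (Suc t)\<close> by simp
        next
          case False
          then show ?thesis using car_ball_nopick[where zeta="?z" and s=t and u=u and c=c, OF \<open>?z (Suc t)\<close> False] g0 by simp
        qed
      next
        case False
        then show ?thesis using car_empty[where zeta="?z", OF False] g by simp
      qed
    qed
  qed
  have iS: "i \<in> {1..d}" "Suc i \<in> {1..d}" "i \<in> {1..<d}" using i m by auto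
  have xi: "x i \<ge> 1" using xj i by simp
  have le_m: "ball_pos x (Suc i) \<le> ball_pos x m" using bp_le_iff[of "Suc i" m x] i by auto
  have sp: "ball_pos x (Suc i) = ball_pos x i + x i + 1" using i by simp
  have A: "int (posn c d x u i) - int (ball_pos x i) \<le> (if u (ball_pos x i) then 1 else 0)"
  proof (cases "u (ball_pos x i)")
    case True
    have "\<not> ?z (ball_pos x i + 1)" using cfg_between[of i x "ball_pos x i + 1" d] sp xi i by auto
    then have "?G (ball_pos x i + 1) = 0" using G0[of "ball_pos x i + 1"] sp xi le_m by simp
    then have "cnt (newc c d x u) (ball_pos x i + 1) = i"
      using Nnew_eq[of c d x u "ball_pos x i + 1"] N_pos_plus[where x=x and i=i and d=d, OF iS(3) xi] by simp
    then have "posn c d x u i \<le> ball_pos x i + 1" using posn_upper[OF d iS(1)] by simp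
    then show ?thesis using True by simp
  next
    case False
    have "?G (ball_pos x i) = 0" using G0[of "ball_pos x i"] False sp le_m by simp
    then have "cnt (newc c d x u) (ball_pos x i) = i"
      using Nnew_eq[of c d x u "ball_pos x i"] N_pos[OF iS(1), of x] by simp
    then have "posn c d x u i \<le> ball_pos x i" using posn_upper[OF d iS(1)] by simp
    then show ?thesis using False by simp
  qed
  have B: "int (posn c d x u (Suc i)) - int (ball_pos x (Suc i)) \<ge> (if u (ball_pos x (Suc i)) then 1 else 0)"
  proof (cases "u (ball_pos x (Suc i))")
    case True
    have "?G (ball_pos x (Suc i)) = 1" using G0[of "ball_pos x (Suc i)"] True le_m cfg_pos[OF iS(2), of x]
      by (simp del: ball_pos.simps)
    then have "cnt (newc c d x u) (ball_pos x (Suc i)) < Suc i"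
      using Nnew_eq[of c d x u "ball_pos x (Suc i)"] N_pos[OF iS(2), of x] by simp
    then have "ball_pos x (Suc i) < posn c d x u (Suc i)" using posn_lower[OF d iS(2)] by simp
    then show ?thesis using True by simp
  next
    case False
    then show ?thesis using posn_ge[OF d iS(2), of x c u] by simp
  qed
  show ?thesis unfolding inc_eq[OF d iS(3)] using A B by linarith
qed

lemma D4:
  assumes d: "d \<ge> 1" and i: "i \<in> {1..<d}" and xi: "x i \<ge> 1" and c: "c \<noteq> 0"
  shows "int (gaps_of_config d (newc c d x (\<lambda>s. s = ball_pos x i)) i) - int (x i) = -1"
proof -
  let ?u = "\<lambda>s. s = ball_pos x i"
  let ?z = "config_of_gaps d x"
  let ?G = "carrier c ?z ?u"
  have sp: "ball_pos x (Suc i) = ball_pos x i + x i + 1" using i by simp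
  have iS: "i \<in> {1..d}" "Suc i \<in> {1..d}" using i by auto
  have G0: "?G t = (if t = ball_pos x i then 1 else 0)" for t
  proof (induction t)
    case 0 then show ?case using bp_ge[of i x] i by simp
  next
    case (Suc t)
    show ?case
    proof (cases "Suc t = ball_pos x i")
      case True
      then have "?G t = 0" using Suc by simp
      have "?G (Suc t) = 1"
        by (rule car_ball_pick0[where zeta="?z" and s=t and u="?u", OF _ _ _ c])
           (use True cfg_pos[OF iS(1), of x] \<open>?G t = 0\<close> in auto)
      then show ?thesis using True by simp
    next
      case F: False
      show ?thesis
      proof (cases "t = ball_pos x i")
        case True
        then have "\<not> ?z (Suc t)" using cfg_between[of i x "Suc t" d] sp xi i by auto
        then show ?thesis using car_empty[where zeta="?z", OF \<open>\<not> ?z (Suc t)\<close>] Suc True F by simp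
      next
        case False
        then have "?G t = 0" using Suc by simp
        then show ?thesis
          using car_empty[where zeta="?z" and s=t and c=c and u="?u"]
                car_ball_nopick[where zeta="?z" and s=t and c=c and u="?u"] F
          by (cases "?z (Suc t)") auto
      qed
    qed
  qed
  have "cnt (newc c d x ?u) (ball_pos x i) < i"
    using Nnew_eq[of c d x ?u "ball_pos x i"] N_pos[OF iS(1), of x] G0[of "ball_pos x i"] by simp
  then have p1: "ball_pos x i < posn c d x ?u i" using posn_lower[OF d iS(1)] by simp
  have "cnt (newc c d x ?u) (ball_pos x i + 1) = i"
    using Nnew_eq[of c d x ?u "ball_pos x i + 1"] N_pos_plus[where x=x and i=i and d=d, OF i xi] G0[of "ball_pos x i + 1"] by simp
  then have p2: "posn c d x ?u i \<le> ball_pos x i + 1" using posn_upper[OF d iS(1)] by simp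
  have "cnt (newc c d x ?u) (ball_pos x (Suc i)) = Suc i"
    using Nnew_eq[of c d x ?u "ball_pos x (Suc i)"] N_pos[OF iS(2), of x] G0[of "ball_pos x (Suc i)"] sp
    by (simp del: ball_pos.simps)
  then have p3: "posn c d x ?u (Suc i) \<le> ball_pos x (Suc i)" using posn_upper[OF d iS(2)] by simp
  have p4: "ball_pos x (Suc i) \<le> posn c d x ?u (Suc i)" using posn_ge[OF d iS(2)] .
  show ?thesis unfolding inc_eq[OF d i] using p1 p2 p3 p4 by linarith
qed



lemma fin_coins: "finite (set_pmf (coins eps d x))"
  unfolding coins_def
  by (rule finite_subset[OF set_Pi_pmf_subset']) (auto intro!: finite_PiE_dflt)

lemma integ_coins: "integrable (measure_pmf (coins eps d x)) (f :: _ \<Rightarrow> real)"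
  by (rule integrable_measure_pmf_finite[OF fin_coins])

lemma drift_eq: "drift eps c d x i = measure_pmf.expectation (coins eps d x)
   (\<lambda>u. real_of_int (int (gaps_of_config d (newc c d x u) i) - int (x i)))"
  unfolding drift_def increment_law_def newc_def by simp

lemma E_marg:
  assumes "s \<in> {1..ball_pos x d}" "0 \<le> eps" "eps \<le> 1"
  shows "measure_pmf.expectation (coins eps d x) (\<lambda>u. if u s then 1 else 0 :: real) = 1 - eps"
proof -
  have "measure_pmf.expectation (coins eps d x) (\<lambda>u. if u s then 1 else 0 :: real)
      = measure_pmf.expectation (map_pmf (\<lambda>f. f s) (coins eps d x)) (\<lambda>b. if b then 1 else 0 :: real)"
    by simp
  also have "map_pmf (\<lambda>f. f s) (coins eps d x) = bernoulli_pmf (1 - eps)"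
    unfolding coins_def using assms by (subst Pi_pmf_component) auto
  finally show ?thesis using assms by simp
qed

lemma prod_of_bool_real: "finite A \<Longrightarrow> (\<Prod>s\<in>A. (if P s then 1 else 0 :: real)) = (if (\<forall>s\<in>A. P s) then 1 else 0)"
  by (induction A rule: finite_induct) auto

lemma bp_ne: "1 \<le> j \<Longrightarrow> j < k \<Longrightarrow> ball_pos x k \<noteq> ball_pos x j"
  by (metis bp_strict nat_less_le)

lemma bp_notin: "ball_pos x (Suc m) \<notin> ball_pos x ` {1..m}"
proof
  assume "ball_pos x (Suc m) \<in> ball_pos x ` {1..m}"
  then obtain j where "j \<in> {1..m}" "ball_pos x (Suc m) = ball_pos x j" by blast
  then show False using bp_ne[of j "Suc m" x] by auto
qed

lemma E_event:
  fixes x :: "nat \<Rightarrow> nat" and eps :: real and m d :: nat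
  assumes eps: "0 \<le> eps" "eps \<le> 1" and m: "m \<in> {1..<d}"
  defines "Q \<equiv> \<lambda>s b. (s \<in> ball_pos x ` {1..m} \<longrightarrow> \<not> b) \<and> (s = ball_pos x (Suc m) \<longrightarrow> b)"
  shows "measure_pmf.expectation (coins eps d x)
           (\<lambda>u. \<Prod>s\<in>{1..ball_pos x d}. (if Q s (u s) then 1 else 0 :: real)) = eps ^ m * (1 - eps)"
proof -
  let ?A = "{1..ball_pos x d}"
  let ?Z = "ball_pos x ` {1..m}"
  let ?p = "ball_pos x (Suc m)"
  define h where "h = (\<lambda>s. if s \<in> ?Z then eps else if s = ?p then 1 - eps else (1::real))"
  have "measure_pmf.expectation (coins eps d x) (\<lambda>u. \<Prod>s\<in>?A. (if Q s (u s) then 1 else 0 :: real))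
      = (\<Prod>s\<in>?A. measure_pmf.expectation (bernoulli_pmf (1 - eps)) (\<lambda>b. if Q s b then 1 else 0 :: real))"
    unfolding coins_def
    by (rule expectation_prod_Pi_pmf) (auto intro!: integrable_measure_pmf_finite)
  also have "\<dots> = (\<Prod>s\<in>?A. h s)"
  proof (rule prod.cong[OF refl])
    fix s assume "s \<in> ?A"
    have pZ: "?p \<notin> ?Z" by (rule bp_notin)
    show "measure_pmf.expectation (bernoulli_pmf (1 - eps)) (\<lambda>b. if Q s b then 1 else 0 :: real) = h s"
      using eps pZ unfolding h_def Q_def by auto
  qed
  also have "(\<Prod>s\<in>?A. h s) = (\<Prod>s\<in>?Z. h s) * (\<Prod>s\<in>?A - ?Z. h s)"
  proof -
    have "?Z \<subseteq> ?A" using m bp_le_iff[of _ d x] bp_ge[of _ x] by (auto, meson le_trans bp_ge)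
    then show ?thesis by (subst prod.subset_diff[of ?Z ?A]) auto
  qed
  also have "(\<Prod>s\<in>?Z. h s) = eps ^ m"
  proof -
    have "(\<Prod>s\<in>?Z. h s) = (\<Prod>s\<in>?Z. eps)" unfolding h_def by (rule prod.cong) auto
    moreover have "card ?Z = m" by (subst card_image) (auto simp: inj_on_def bp_eq_iff)
    ultimately show ?thesis by simp
  qed
  also have "(\<Prod>s\<in>?A - ?Z. h s) = 1 - eps"
  proof -
    have pin: "?p \<in> ?A - ?Z"
    proof -
      have "?p \<le> ball_pos x d" using bp_le_iff[of "Suc m" d x] m by auto
      moreover have "?p \<notin> ?Z" by (rule bp_notin)
      ultimately show ?thesis using bp_ge[of "Suc m" x] by auto
    qed
    have "(\<Prod>s\<in>?A - ?Z. h s) = h ?p * (\<Prod>s\<in>?A - ?Z - {?p}. h s)"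
      using pin by (subst prod.remove[of _ ?p]) auto
    also have "(\<Prod>s\<in>?A - ?Z - {?p}. h s) = 1" unfolding h_def by (rule prod.neutral) auto
    finally show ?thesis using pin unfolding h_def by simp
  qed
  finally show ?thesis by simp
qed



lemma R_lower:
  assumes "d \<ge> 1" "i \<in> {1..<d}"
  shows "drift eps c d x i \<ge> - 2 * real d"
  unfolding drift_eq
proof (rule measure_pmf.integral_ge_const[OF integ_coins])
  show "AE u in measure_pmf (coins eps d x).
          - 2 * real d \<le> real_of_int (int (gaps_of_config d (newc c d x u) i) - int (x i))"
  proof (rule AE_I2)
    fix u
    have "int (gaps_of_config d (newc c d x u) i) - int (x i) \<ge> - 2 * int d"
      by (rule inc_lower[OF assms])
    then show "- 2 * real d \<le> real_of_int (int (gaps_of_config d (newc c d x u) i) - int (x i))"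
      by linarith
  qed
qed

lemma R_m:
  assumes d: "d \<ge> 1" and m: "m \<in> {1..<d}" and xm: "x m = 0" and c: "c \<noteq> 0"
    and eps: "0 \<le> eps" "eps \<le> 1"
  shows "drift eps c d x m \<ge> eps ^ m * (1 - eps)"
proof -
  let ?A = "{1..ball_pos x d}"
  define Q where "Q = (\<lambda>s b. (s \<in> ball_pos x ` {1..m} \<longrightarrow> \<not> b) \<and> (s = ball_pos x (Suc m) \<longrightarrow> b))"
  let ?ind = "\<lambda>u. \<Prod>s\<in>?A. (if Q s (u s) then 1 else 0 :: real)"
  let ?f = "\<lambda>u. real_of_int (int (gaps_of_config d (newc c d x u) m) - int (x m))"
  have "eps ^ m * (1 - eps) = measure_pmf.expectation (coins eps d x) ?ind"
    using E_event[OF eps m] unfolding Q_def by simp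
  also have "\<dots> \<le> measure_pmf.expectation (coins eps d x) ?f"
  proof (rule integral_mono[OF integ_coins integ_coins])
    fix u
    have ind: "?ind u = (if (\<forall>s\<in>?A. Q s (u s)) then 1 else 0)" by (rule prod_of_bool_real) simp
    show "?ind u \<le> ?f u"
    proof (cases "\<forall>s\<in>?A. Q s (u s)")
      case True
      have inA: "ball_pos x j \<in> ?A" if "j \<in> {1..d}" for j
        using that bp_ge[of j x] bp_le_iff[of j d x] by auto
      have "gaps_of_config d (newc c d x u) m \<ge> 1"
      proof (rule D2[where x=x and m=m and d=d and c=c and u=u, OF d m xm c])
        fix j assume j: "j \<in> {1..m}"
        then have "j \<in> {1..d}" using m by auto
        then show "\<not> u (ball_pos x j)" using True inA j unfolding Q_def by auto
      next
        have "Suc m \<in> {1..d}" using m by auto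
        then show "u (ball_pos x (Suc m))" using True inA[of "Suc m"] unfolding Q_def
          by (metis (no_types, lifting))
      qed
      then show ?thesis using ind True xm by simp
    next
      case False
      then have "?ind u = 0" using ind by simp
      moreover have "0 \<le> ?f u" using xm by simp
      ultimately show ?thesis by linarith
    qed
  qed
  finally show ?thesis unfolding drift_eq .
qed

lemma R_before:
  assumes d: "d \<ge> 1" and m: "m \<in> {1..<d}" and xj: "\<And>j. j \<in> {1..<m} \<Longrightarrow> x j \<ge> 1"
    and c: "c \<noteq> 0" and i: "i \<in> {1..<m}" and eps: "0 \<le> eps" "eps \<le> 1"
  shows "drift eps c d x i \<ge> 0"
proof -
  let ?g1 = "\<lambda>u. if u (ball_pos x (Suc i)) then 1 else 0 :: real"
  let ?g2 = "\<lambda>u. if u (ball_pos x i) then 1 else 0 :: real"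
  let ?f = "\<lambda>u. real_of_int (int (gaps_of_config d (newc c d x u) i) - int (x i))"
  have inA: "ball_pos x j \<in> {1..ball_pos x d}" if "j \<in> {1..d}" for j
    using that bp_ge[of j x] bp_le_iff[of j d x] by auto
  have i1: "i \<in> {1..d}" "Suc i \<in> {1..d}" using i m by auto
  have "0 = measure_pmf.expectation (coins eps d x) ?g1 - measure_pmf.expectation (coins eps d x) ?g2"
    using E_marg[OF inA[OF i1(1)] eps] E_marg[OF inA[OF i1(2)] eps] by simp
  also have "\<dots> = measure_pmf.expectation (coins eps d x) (\<lambda>u. ?g1 u - ?g2 u)"
    by (rule Bochner_Integration.integral_diff[symmetric, OF integ_coins integ_coins])
  also have "\<dots> \<le> measure_pmf.expectation (coins eps d x) ?f"
  proof (rule integral_mono[OF integ_coins integ_coins])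
    fix u
    have "int (gaps_of_config d (newc c d x u) i) - int (x i)
     \<ge> (if u (ball_pos x (Suc i)) then 1 else 0) - (if u (ball_pos x i) then 1 else 0)"
      by (rule D3[OF d m xj c i])
    then show "?g1 u - ?g2 u \<le> ?f u" by (auto split: if_splits)
  qed
  finally show ?thesis unfolding drift_eq .
qed



lemma L_neg:
  assumes d: "d \<ge> 1" and i: "i \<in> {1..<d}" and xi: "x i \<ge> 1" and c: "c \<noteq> 0"
    and eps: "0 < eps" "eps < 1"
  shows "\<exists>v\<in>set_pmf (increment_law eps c d x). v i < 0"
proof -
  let ?u = "\<lambda>s. s = ball_pos x i"
  have "ball_pos x i \<le> ball_pos x d" using bp_le_iff[of i d x] i by auto
  moreover have "1 \<le> ball_pos x i" using bp_ge[of i x] i by auto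
  ultimately have "?u \<in> set_pmf (coins eps d x)"
    unfolding coins_def using eps by (subst set_Pi_pmf) (auto simp: PiE_dflt_def)
  then have "(\<lambda>j. int (gaps_of_config d (newc c d x ?u) j) - int (x j)) \<in> set_pmf (increment_law eps c d x)"
    unfolding increment_law_def newc_def set_map_pmf by (rule imageI)
  moreover have "int (gaps_of_config d (newc c d x ?u) i) - int (x i) = -1" by (rule D4[where x=x and i=i and d=d and c=c, OF d i xi c])
  ultimately show ?thesis by (intro bexI[of _ "\<lambda>j. int (gaps_of_config d (newc c d x ?u) j) - int (x j)"]) simp_all
qed

lemma L_zero:
  assumes "x i = 0" "v \<in> set_pmf (increment_law eps c d x)"
  shows "v i \<ge> 0"
  using assms unfolding increment_law_def by auto

definition fz :: "nat \<Rightarrow> (nat \<Rightarrow> nat) \<Rightarrow> nat" where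
  "fz d x = (LEAST i. i \<in> {1..d-1} \<and> x i = 0)"

lemma fz_props:
  assumes "x \<in> boundary d"
  shows "fz d x \<in> {1..d-1}" "x (fz d x) = 0" "\<And>j. j \<in> {1..d-1} \<Longrightarrow> j < fz d x \<Longrightarrow> x j \<noteq> 0"
proof -
  obtain i where i: "i \<in> {1..d-1}" "x i = 0" using assms unfolding boundary_def by blast
  have "fz d x \<in> {1..d-1} \<and> x (fz d x) = 0"
    unfolding fz_def by (rule LeastI[of _ i]) (use i in simp)
  then show "fz d x \<in> {1..d-1}" "x (fz d x) = 0" by auto
  fix j assume "j \<in> {1..d-1}" "j < fz d x"
  then have "\<not> (j \<in> {1..d-1} \<and> x j = 0)"
    using not_less_Least[of j "\<lambda>i. i \<in> {1..d-1} \<and> x i = 0"] unfolding fz_def by blast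
  then show "x j \<noteq> 0" using \<open>j \<in> {1..d-1}\<close> by simp
qed

lemma dist_law:
  assumes d: "d \<ge> 2" and x: "x \<in> boundary d" and y: "y \<in> boundary d"
    and law: "increment_law eps0 \<infinity> d x = increment_law eps0 \<infinity> d y"
    and eps: "0 < eps0" "eps0 < 1"
  shows "y (fz d x) = 0"
proof -
  have key: "False" if "x' \<in> boundary d" "y' \<in> boundary d"
      "increment_law eps0 \<infinity> d x' = increment_law eps0 \<infinity> d y'" "fz d y' < fz d x'" for x' y'
  proof -
    let ?j = "fz d y'"
    have j: "?j \<in> {1..d-1}" "y' ?j = 0" using fz_props[OF that(2)] by auto
    have "x' ?j \<noteq> 0" using fz_props(3)[OF that(1) j(1) that(4)] .
    then obtain v where v: "v \<in> set_pmf (increment_law eps0 \<infinity> d x')" "v ?j < 0"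
    proof -
      have "?j \<in> {1..<d}" "x' ?j \<ge> 1" "(\<infinity>::enat) \<noteq> 0" "d \<ge> 1" using j d \<open>x' ?j \<noteq> 0\<close> by auto
      from L_neg[where x=x' and d=d and c="\<infinity>" and i="?j", OF this(4,1,2,3) eps] show ?thesis using that by blast
    qed
    then show False using L_zero[where x=y' and i="?j" and v=v and eps=eps0 and c="\<infinity>" and d=d, OF j(2)] that(3) by simp
  qed
  have "\<not> fz d y < fz d x" using key[OF x y law] by blast
  moreover have "\<not> fz d x < fz d y" using key[OF y x law[symmetric]] by blast
  ultimately have "fz d y = fz d x" by simp
  then show ?thesis using fz_props(2)[OF y] by simp
qed


theorem lemma6p4:
  fixes d :: nat and eps eps0 :: real and c :: enat
  assumes "d \<ge> 2"
    and "0 < eps" and "eps < 1"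
    and "c \<noteq> 0"
    and "0 < eps0" and "eps0 < 1"
  shows "weakly_completely_S (d - 1) (cells eps0 d)
           (\<lambda>i p. cell_drift eps c d p i) (cell_f d)"
proof -
  have d1: "d \<ge> 1" using assms by simp
  define del where "del = eps ^ (d - 1) * (1 - eps)"
  have del_pos: "0 < del" unfolding del_def using assms by simp
  have del_le: "del \<le> 1" unfolding del_def using assms
    by (intro mult_le_one) (auto simp: power_le_one)
  define t where "t = del / (4 * real d ^ 2)"
  have dpos: "real d ^ 2 \<ge> 1" using d1 by (simp add: one_le_power)
  have t_pos: "0 < t" unfolding t_def using del_pos d1 by simp
  have t_le: "t \<le> 1" unfolding t_def using del_le dpos by (simp add: divide_le_eq)
  have t_eq: "2 * real d ^ 2 * t = del / 2" unfolding t_def using d1 by (simp add: field_simps)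
  define C where "C = 2 / (del * t ^ d)"
  have C_pos: "0 < C" unfolding C_def using del_pos t_pos by simp
  have C_eq: "C * t ^ d * del / 2 = 1" unfolding C_def using del_pos t_pos by (simp add: field_simps)
  define lam where "lam = (\<lambda>i::nat. C * t ^ i)"
  have lam_pos: "lam i > 0" for i unfolding lam_def using C_pos t_pos by simp
  let ?rel = "{(x, y). x \<in> boundary d \<and> y \<in> boundary d \<and>
              increment_law eps0 \<infinity> d x = increment_law eps0 \<infinity> d y}"
  show ?thesis unfolding weakly_completely_S_def
  proof (intro allI impI)
    fix I assume I: "I \<subseteq> {1..d - 1} \<and> I \<noteq> {}"
    have finI: "finite I" using I finite_subset by blast
    show "\<exists>lam. (\<forall>i\<in>I. 0 < lam i) \<and>
           (\<forall>j\<in>cells eps0 d. cell_f d j \<subseteq> I \<longrightarrow> 1 \<le> (\<Sum>i\<in>I. lam i * cell_drift eps c d j i))"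
    proof (intro exI[of _ lam] conjI ballI impI)
      fix i assume "i \<in> I" show "0 < lam i" by (rule lam_pos)
    next
      fix p assume p: "p \<in> cells eps0 d" and fI: "cell_f d p \<subseteq> I"
      obtain a where a: "a \<in> boundary d" "p = ?rel `` {a}"
        using p unfolding cells_def by (rule quotientE)
      have mem: "y \<in> p \<longleftrightarrow> y \<in> boundary d \<and> increment_law eps0 \<infinity> d a = increment_law eps0 \<infinity> d y" for y
        using a by auto
      define x where "x = (SOME x. x \<in> p)"
      have "a \<in> p" using mem a by simp
      then have "x \<in> p" unfolding x_def by (rule someI[of "\<lambda>x. x \<in> p"])
      then have xb: "x \<in> boundary d" and lx: "increment_law eps0 \<infinity> d a = increment_law eps0 \<infinity> d x"
        using mem by auto
      define m where "m = fz d x"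
      have m: "m \<in> {1..d-1}" "x m = 0" "\<And>j. j \<in> {1..d-1} \<Longrightarrow> j < m \<Longrightarrow> x j \<noteq> 0"
        using fz_props[OF xb] unfolding m_def by auto
      have m': "m \<in> {1..<d}" using m(1) assms(1) by auto
      have "m \<in> cell_f d p"
      proof -
        have "y m = 0" if "y \<in> p" for y
        proof -
          have yb: "y \<in> boundary d" and ly: "increment_law eps0 \<infinity> d a = increment_law eps0 \<infinity> d y"
            using that mem by auto
          show ?thesis unfolding m_def
            by (rule dist_law[OF assms(1) xb yb _ assms(5,6)]) (use lx ly in simp)
        qed
        then have "bdd_above ((\<lambda>y. y m) ` p)" by (intro bdd_aboveI[of _ 0]) auto
        then show ?thesis unfolding cell_f_def using m(1) by simp
      qed
      then have mI: "m \<in> I" using fI by blast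
      have Rdef: "cell_drift eps c d p i = drift eps c d x i" for i
        unfolding cell_drift_def x_def ..
      have xj: "x j \<ge> 1" if "j \<in> {1..<m}" for j using m(3)[of j] m(1) that by fastforce
      have epsb: "0 \<le> eps" "eps \<le> 1" using assms by auto
      have Rm: "drift eps c d x m \<ge> del"
      proof -
        have "eps ^ (d - 1) \<le> eps ^ m" using m(1) epsb by (intro power_decreasing) auto
        then have "del \<le> eps ^ m * (1 - eps)" unfolding del_def using epsb by (intro mult_right_mono) auto
        also have "\<dots> \<le> drift eps c d x m" by (rule R_m[where x=x and m=m and d=d and c=c and eps=eps, OF d1 m' m(2) assms(4) epsb])
        finally show ?thesis .
      qed
      define K where "K = C * t ^ (Suc m) * (2 * real d)"
      have K_nn: "K \<ge> 0" unfolding K_def using C_pos t_pos by simp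
      have each: "lam i * drift eps c d x i \<ge> - K" if i: "i \<in> I - {m}" for i
      proof (cases "i < m")
        case True
        have "i \<in> {1..<m}" using i I True by auto
        then have "drift eps c d x i \<ge> 0" using R_before[where x=x and m=m and d=d and c=c and eps=eps and i=i] d1 m' xj assms(4) epsb by blast
        then have "lam i * drift eps c d x i \<ge> 0" using lam_pos[of i] by simp
        then show ?thesis using K_nn by linarith
      next
        case False
        then have im: "Suc m \<le> i" using i by auto
        have "i \<in> {1..d-1}" using i I by blast
        then have iI: "i \<in> {1..<d}" using assms(1) by auto
        have Rl: "drift eps c d x i \<ge> - 2 * real d" by (rule R_lower[where x=x and d=d and c=c and eps=eps and i=i, OF d1 iI])
        have "t ^ i \<le> t ^ Suc m" using im t_pos t_le by (intro power_decreasing) auto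
        then have li: "lam i \<le> C * t ^ Suc m" unfolding lam_def using C_pos by simp
        have "lam i * drift eps c d x i \<ge> lam i * (- 2 * real d)"
          using Rl lam_pos[of i] by (intro mult_left_mono) auto
        moreover have "lam i * (- 2 * real d) \<ge> C * t ^ Suc m * (- 2 * real d)"
          using li by (intro mult_right_mono_neg) auto
        ultimately show ?thesis unfolding K_def by linarith
      qed
      have cardI: "card (I - {m}) \<le> d"
      proof -
        have "card (I - {m}) \<le> card {1..d-1}" using I by (intro card_mono) auto
        then show ?thesis by simp
      qed
      have "(\<Sum>i\<in>I - {m}. lam i * drift eps c d x i) \<ge> (\<Sum>i\<in>I - {m}. - K)"
        using each by (intro sum_mono) auto
      moreover have "(\<Sum>i\<in>I - {m}. - K) = - (real (card (I - {m})) * K)" by simp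
      moreover have "real (card (I - {m})) * K \<le> real d * K" using cardI K_nn by (intro mult_right_mono) auto
      ultimately have rest: "(\<Sum>i\<in>I - {m}. lam i * drift eps c d x i) \<ge> - (real d * K)" by linarith
      have first: "lam m * drift eps c d x m \<ge> C * t ^ m * del"
        unfolding lam_def using Rm C_pos t_pos by (intro mult_left_mono) auto
      have "real d * K = C * t ^ m * (2 * real d ^ 2 * t)" unfolding K_def by (simp add: power2_eq_square)
      also have "\<dots> = C * t ^ m * (del / 2)" using t_eq by simp
      finally have dK: "real d * K = C * t ^ m * del / 2" by simp
      have "t ^ d \<le> t ^ m" using m(1) t_pos t_le by (intro power_decreasing) auto
      then have "C * t ^ d * del / 2 \<le> C * t ^ m * del / 2" using C_pos del_pos
        by (intro divide_right_mono mult_right_mono mult_left_mono) auto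
      then have fin: "1 \<le> C * t ^ m * del / 2" using C_eq by simp
      have "(\<Sum>i\<in>I. lam i * cell_drift eps c d p i) = (\<Sum>i\<in>I. lam i * drift eps c d x i)"
        by (simp add: Rdef)
      also have "\<dots> = lam m * drift eps c d x m + (\<Sum>i\<in>I - {m}. lam i * drift eps c d x i)"
        using finI mI by (simp add: sum.remove)
      finally show "1 \<le> (\<Sum>i\<in>I. lam i * cell_drift eps c d p i)"
        using rest first dK fin by linarith
    qed
  qed
qed

end
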